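(* Let $\Psi$ be a commuting interaction on a finite graph $\Lambda$. For all $X\subset\Lambda'\subset\Lambda$, all $A\in\mathcal{A}_X$ and all $t\in\mathbb{R}$, $$\big\|\tau^\Lambda_t(A)-\tau^{\Lambda'}_t(A)\big\|\le 2\,\|A\|\,|t|\sum_{\substack{Z\subset\Lambda:\ Z\cap X\neq\emptyset,\\ Z\cap(\Lambda\setminus\Lambda')\neq\emptyset}}\|\Psi(Z)\|.$$ Moreover, if $\|\Psi\|_F<\infty$ for some decaying function $F:[0,\infty)\to(0,\infty)$, then $$\big\|\tau^\Lambda_t(A)-\tau^{\Lambda'}_t(A)\big\|\le 2\,\|A\|\,\|\Psi\|_F\,|t|\sum_{x\in X}\sum_{y\in\Lambda\setminus\Lambda'}F(d(x,y)).$$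
   Context: $\Lambda$ has graph distance $d$. Each site carries $\mathbb{C}^q$, $\mathcal{A}_Z=\mathcal{B}(\bigotimes_{x\in Z}\mathbb{C}^q)$ embedded in $\mathcal{A}_\Lambda$ via $A\mapsto A\otimes\mathbf{1}$. An interaction assigns to each $Z\subset\Lambda$ a self-adjoint $\Psi(Z)\in\mathcal{A}_Z$; commuting means $[\Psi(Z),\Psi(Z')]=0$ for all $Z,Z'$. $\|\Psi\|_F=\sup_{x,y\in\Lambda}\sum_{Z\ni x,y}\|\Psi(Z)\|/F(d(x,y))$. For $\Lambda'\subset\Lambda$, $H_{\Lambda'}=\sum_{Z\subset\Lambda'}\Psi(Z)$ and $\tau^{\Lambda'}_t(A)=e^{itH_{\Lambda'}}Ae^{-itH_{\Lambda'}}$. *)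

theory Defs
  imports "HOL-Analysis.Analysis"
begin

(* Quantum spin system on a finite vertex set Lambda = UNIV :: 'v set (with 'v finite).
   Single-site space C^q with q = CARD('q); the total Hilbert space
   (tensor product over all sites) is complex ^ ('v => 'q), i.e. functions on
   configurations sigma :: 'v => 'q, with its l2 (Hilbert) norm. *)

type_synonym ('v, 'q) op = "complex ^ ('v \<Rightarrow> 'q) ^ ('v \<Rightarrow> 'q)"

definition opnorm :: "('v::finite, 'q::finite) op \<Rightarrow> real" where
  "opnorm A = onorm (\<lambda>x. A *v x)"

definition adj :: "('v::finite, 'q::finite) op \<Rightarrow> ('v, 'q) op" where
  "adj A = (\<chi> i j. cnj (A $ j $ i))"

definition self_adjoint :: "('v::finite, 'q::finite) op \<Rightarrow> bool" where
  "self_adjoint A \<longleftrightarrow> adj A = A"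

definition csmul :: "complex \<Rightarrow> ('v::finite, 'q::finite) op \<Rightarrow> ('v, 'q) op" where
  "csmul c A = (\<chi> i j. c * A $ i $ j)"

fun opow :: "('v::finite, 'q::finite) op \<Rightarrow> nat \<Rightarrow> ('v, 'q) op" where
  "opow A 0 = mat 1"
| "opow A (Suc n) = A ** opow A n"

definition mexp :: "('v::finite, 'q::finite) op \<Rightarrow> ('v, 'q) op" where
  "mexp A = (\<Sum>n. (1 / fact n) *\<^sub>R opow A n)"

(* A \<in> A_Z, i.e. A = a \<otimes> 1 with a acting on the sites in Z:
   matrix entries vanish unless the configurations agree off Z, and
   depend only on the restrictions of the configurations to Z. *)
definition local_op :: "'v set \<Rightarrow> ('v::finite, 'q::finite) op \<Rightarrow> bool" where
  "local_op Z A \<longleftrightarrow>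
     (\<forall>\<sigma> \<tau>. (\<exists>v. v \<notin> Z \<and> \<sigma> v \<noteq> \<tau> v) \<longrightarrow> A $ \<sigma> $ \<tau> = 0) \<and>
     (\<forall>\<sigma> \<tau> \<sigma>' \<tau>'. (\<forall>v\<in>Z. \<sigma> v = \<sigma>' v \<and> \<tau> v = \<tau>' v) \<and>
        (\<forall>v. v \<notin> Z \<longrightarrow> \<sigma> v = \<tau> v \<and> \<sigma>' v = \<tau>' v) \<longrightarrow> A $ \<sigma> $ \<tau> = A $ \<sigma>' $ \<tau>')"

definition interaction :: "('v::finite set \<Rightarrow> ('v, 'q::finite) op) \<Rightarrow> bool" where
  "interaction \<Psi> \<longleftrightarrow> (\<forall>Z. local_op Z (\<Psi> Z) \<and> self_adjoint (\<Psi> Z))"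

definition commuting :: "('v::finite set \<Rightarrow> ('v, 'q::finite) op) \<Rightarrow> bool" where
  "commuting \<Psi> \<longleftrightarrow> (\<forall>Z Z'. \<Psi> Z ** \<Psi> Z' = \<Psi> Z' ** \<Psi> Z)"

definition ham :: "('v::finite set \<Rightarrow> ('v, 'q::finite) op) \<Rightarrow> 'v set \<Rightarrow> ('v, 'q) op" where
  "ham \<Psi> L = (\<Sum>Z\<in>{Z. Z \<subseteq> L}. \<Psi> Z)"

definition dyn :: "('v::finite set \<Rightarrow> ('v, 'q::finite) op) \<Rightarrow> 'v set \<Rightarrow> real \<Rightarrow> ('v, 'q) op \<Rightarrow> ('v, 'q) op" where
  "dyn \<Psi> L t A =
     mexp (csmul (\<i> * complex_of_real t) (ham \<Psi> L)) ** A **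
     mexp (csmul (- (\<i> * complex_of_real t)) (ham \<Psi> L))"

(* ||Psi||_F (finite graph: supremum is a maximum) *)
definition F_norm :: "('v::finite set \<Rightarrow> ('v, 'q::finite) op) \<Rightarrow> ('v \<Rightarrow> 'v \<Rightarrow> real) \<Rightarrow> (real \<Rightarrow> real) \<Rightarrow> real" where
  "F_norm \<Psi> d F = (MAX p \<in> (UNIV :: ('v \<times> 'v) set).
      (\<Sum>Z\<in>{Z. fst p \<in> Z \<and> snd p \<in> Z}. opnorm (\<Psi> Z)) / F (d (fst p) (snd p)))"

(* decaying function on a finite graph: positive and non-increasing on [0,inf)
   (the integrability / convolution conditions are automatic on finite graphs) *)
definition decaying :: "(real \<Rightarrow> real) \<Rightarrow> bool" where
  "decaying F \<longleftrightarrow> (\<forall>r\<ge>0. F r > 0) \<and> (\<forall>r s. 0 \<le> r \<longrightarrow> r \<le> s \<longrightarrow> F s \<le> F r)"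

end

theory Submission
  imports Defs
begin

typedef (overloaded) 'a endo = "UNIV :: ('a::euclidean_space \<Rightarrow>\<^sub>L 'a) set" by simp

declare Rep_endo_inverse[simp] Abs_endo_inverse[simplified, simp]

lemma Rep_endo_inject': "Rep_endo x = Rep_endo y \<longleftrightarrow> x = y" by (simp add: Rep_endo_inject)

instantiation endo :: (euclidean_space) real_vector
begin
definition "0 = Abs_endo 0"
definition "x + y = Abs_endo (Rep_endo x + Rep_endo y)"
definition "x - y = Abs_endo (Rep_endo x - Rep_endo y)"
definition "- x = Abs_endo (- Rep_endo x)"
definition "r *\<^sub>R x = Abs_endo (r *\<^sub>R Rep_endo x)"
instance
  by standard (simp_all add: zero_endo_def plus_endo_def minus_endo_def uminus_endo_def
     scaleR_endo_def Rep_endo_inject[symmetric] algebra_simps scaleR_add_right scaleR_add_left)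
end

lemma Rep_endo_zero[simp]: "Rep_endo 0 = 0" by (simp add: zero_endo_def)
lemma Rep_endo_plus[simp]: "Rep_endo (x + y) = Rep_endo x + Rep_endo y" by (simp add: plus_endo_def)
lemma Rep_endo_minus[simp]: "Rep_endo (x - y) = Rep_endo x - Rep_endo y" by (simp add: minus_endo_def)
lemma Rep_endo_uminus[simp]: "Rep_endo (- x) = - Rep_endo x" by (simp add: uminus_endo_def)
lemma Rep_endo_scaleR[simp]: "Rep_endo (r *\<^sub>R x) = r *\<^sub>R Rep_endo x" by (simp add: scaleR_endo_def)

instantiation endo :: (euclidean_space) real_normed_vector
begin
definition "norm x = norm (Rep_endo x)"
definition "sgn (x::'a endo) = inverse (norm x) *\<^sub>R x"
definition "dist (x::'a endo) y = norm (x - y)"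
definition "(uniformity :: ('a endo \<times> 'a endo) filter) = (INF e\<in>{0 <..}. principal {(x, y). dist x y < e})"
definition "open (S :: 'a endo set) = (\<forall>x\<in>S. \<forall>\<^sub>F (x', y) in uniformity. x' = x \<longrightarrow> y \<in> S)"
instance
  apply standard
  apply (simp_all add: norm_endo_def sgn_endo_def dist_endo_def uniformity_endo_def open_endo_def)
  apply (simp_all add: Rep_endo_inject[symmetric] norm_triangle_ineq)
  done
end

lemma id_blinfun_nz: "(id_blinfun :: 'a::euclidean_space \<Rightarrow>\<^sub>L 'a) \<noteq> 0"
  by (metis norm_blinfun_id norm_zero zero_neq_one)

instantiation endo :: (euclidean_space) real_normed_algebra_1
begin
definition "x * y = Abs_endo (Rep_endo x o\<^sub>L Rep_endo y)"
definition "1 = Abs_endo id_blinfun"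
instance
  apply standard
  apply (simp_all add: times_endo_def one_endo_def Rep_endo_inject[symmetric] norm_endo_def)
  apply (auto intro!: blinfun_eqI simp: blinfun.bilinear_simps norm_blinfun_compose id_blinfun_nz)
  done
end

lemma Rep_endo_times[simp]: "Rep_endo (x * y) = Rep_endo x o\<^sub>L Rep_endo y" by (simp add: times_endo_def)
lemma Rep_endo_one[simp]: "Rep_endo 1 = id_blinfun" by (simp add: one_endo_def)

instance endo :: (euclidean_space) banach
proof
  fix X :: "nat \<Rightarrow> 'a endo"
  assume "Cauchy X"
  hence "Cauchy (\<lambda>n. Rep_endo (X n))"
    unfolding Cauchy_def dist_endo_def norm_endo_def by (simp add: dist_norm)
  then obtain l where "(\<lambda>n. Rep_endo (X n)) \<longlonglongrightarrow> l" using Cauchy_convergent_iff convergent_def by blast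
  hence "X \<longlonglongrightarrow> Abs_endo l"
    unfolding lim_sequentially dist_endo_def norm_endo_def by (simp add: dist_norm)
  thus "convergent X" by (auto simp: convergent_def)
qed

lemma norm_exp_term_le:
  fixes x :: "'a::{real_normed_algebra_1}"
  shows "norm (x ^ k /\<^sub>R fact k) \<le> norm x ^ k /\<^sub>R fact k"
proof -
  have "norm (x ^ k /\<^sub>R fact k) = norm (x ^ k) / fact k" by (simp add: divide_inverse mult.commute)
  also have "\<dots> \<le> norm x ^ k / fact k" by (intro divide_right_mono norm_power_ineq) simp
  finally show ?thesis by (simp add: divide_inverse mult.commute)
qed

lemma norm_exp_minus_one:
  fixes x :: "'a::{real_normed_algebra_1,banach}"
  shows "norm (exp x - 1) \<le> exp (norm x) - 1"
proof -
  have s1: "summable (\<lambda>n. x ^ n /\<^sub>R fact n)" by (rule summable_exp_generic)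
  have s2: "summable (\<lambda>n. norm x ^ n /\<^sub>R fact n)" by (rule summable_exp_generic)
  have e1: "exp x - 1 = (\<Sum>n. x ^ Suc n /\<^sub>R fact (Suc n))"
    using suminf_split_head[OF s1] by (simp add: exp_def)
  have e2: "exp (norm x) - 1 = (\<Sum>n. norm x ^ Suc n /\<^sub>R fact (Suc n))"
    using suminf_split_head[OF s2] unfolding exp_def by simp
  have sn: "summable (\<lambda>n. norm (x ^ Suc n /\<^sub>R fact (Suc n)))"
    using summable_norm_exp[of x] by (subst summable_Suc_iff)
  have s2': "summable (\<lambda>n. norm x ^ Suc n /\<^sub>R fact (Suc n))"
    using s2 by (subst summable_Suc_iff)
  have "norm (exp x - 1) \<le> (\<Sum>n. norm (x ^ Suc n /\<^sub>R fact (Suc n)))"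
    unfolding e1 by (rule summable_norm[OF sn])
  also have "\<dots> \<le> (\<Sum>n. norm x ^ Suc n /\<^sub>R fact (Suc n))"
    by (rule suminf_le[OF _ sn s2']) (rule norm_exp_term_le)
  finally show ?thesis using e2 by simp
qed
lemma telescope_conj:
  fixes v a w :: "'a::ring_1"
  shows "v ^ n * a * w ^ n - a = (\<Sum>k<n. v ^ k * (v * a * w - a) * w ^ k)"
proof (induction n)
  case 0 then show ?case by simp
next
  case (Suc n)
  have "v ^ Suc n * a * w ^ Suc n - a = v ^ n * v * a * (w * w ^ n) - a"
    by (simp only: power_Suc2[of v] power_Suc[of w])
  also have "\<dots> = v ^ n * (v * a * w - a) * w ^ n + (v ^ n * a * w ^ n - a)"
    by (simp add: algebra_simps)
  finally have "v ^ Suc n * a * w ^ Suc n - a = v ^ n * (v * a * w - a) * w ^ n + (v ^ n * a * w ^ n - a)" .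
  then show ?case using Suc by simp
qed

lemma exp_of_nat_mult':
  fixes x :: "'a::{real_normed_algebra_1,banach}"
  shows "exp (of_nat n * x) = exp x ^ n"
proof (induction n)
  case 0 then show ?case by simp
next
  case (Suc n)
  have c: "x * (of_nat n * x) = (of_nat n * x) * x"
    by (metis mult.assoc mult_of_nat_commute)
  have "exp (of_nat (Suc n) * x) = exp (x + of_nat n * x)" by (simp add: algebra_simps)
  also have "\<dots> = exp x * exp (of_nat n * x)" by (rule exp_add_commuting[OF c])
  finally show ?case using Suc by simp
qed

lemma of_nat_scaleR_mult:
  fixes m :: "'a::real_normed_algebra_1"
  shows "of_nat k * (r *\<^sub>R m) = (real k * r) *\<^sub>R m"
  by (simp add: scaleR_conv_of_real mult.assoc[symmetric])

lemma norm_mult3: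
  fixes p q r :: "'a::real_normed_algebra"
  shows "norm (p * q * r) \<le> norm p * norm q * norm r"
  by (rule order_trans[OF norm_mult_ineq mult_right_mono[OF norm_mult_ineq norm_ge_zero]])

lemma conj_bound_n:
  fixes m a :: "'a::{real_normed_algebra_1,banach}"
  assumes U: "\<And>r::real. norm (exp (r *\<^sub>R m)) \<le> 1" and n: "n > 0"
  shows "norm (exp m * a * exp (- m) - a) \<le> 2 * norm a * (real n * (exp (norm m / real n) - 1))"
proof -
  define v where "v = exp ((1 / real n) *\<^sub>R m)"
  define w where "w = exp ((- 1 / real n) *\<^sub>R m)"
  have vn: "v ^ n = exp m"
    unfolding v_def exp_of_nat_mult'[symmetric] of_nat_scaleR_mult using n by simp
  have wn: "w ^ n = exp (- m)"
    unfolding w_def exp_of_nat_mult'[symmetric] of_nat_scaleR_mult using n by simp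
  have vk: "norm (v ^ k) \<le> 1" for k
    unfolding v_def exp_of_nat_mult'[symmetric]
    of_nat_scaleR_mult by (rule U)
  have wk: "norm (w ^ k) \<le> 1" for k
    unfolding w_def exp_of_nat_mult'[symmetric]
    of_nat_scaleR_mult by (rule U)
  have w1: "norm w \<le> 1" using wk[of 1] by simp
  have v1: "norm (v - 1) \<le> exp (norm m / real n) - 1"
    unfolding v_def using norm_exp_minus_one[of "(1 / real n) *\<^sub>R m"] by simp
  have w1': "norm (w - 1) \<le> exp (norm m / real n) - 1"
    unfolding w_def using norm_exp_minus_one[of "(- 1 / real n) *\<^sub>R m"] by simp
  have eq: "v * a * w - a = (v - 1) * a * w + a * (w - 1)" by (simp add: algebra_simps)
  have step: "norm (v * a * w - a) \<le> 2 * norm a * (exp (norm m / real n) - 1)"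
  proof -
    have "norm (v * a * w - a) \<le> norm ((v - 1) * a * w) + norm (a * (w - 1))"
      unfolding eq by (rule norm_triangle_ineq)
    also have "norm ((v - 1) * a * w) \<le> norm (v - 1) * norm a * norm w"
      by (rule norm_mult3)
    also have "\<dots> \<le> (exp (norm m / real n) - 1) * norm a * 1"
      by (intro mult_mono v1 w1 mult_right_mono) auto
    also have "norm (a * (w - 1)) \<le> norm a * (exp (norm m / real n) - 1)"
      by (rule order_trans[OF norm_mult_ineq mult_left_mono[OF w1' norm_ge_zero]])
    finally show ?thesis by simp
  qed
  have "norm (exp m * a * exp (- m) - a) = norm (\<Sum>k<n. v ^ k * (v * a * w - a) * w ^ k)"
    by (simp add: telescope_conj[symmetric] vn wn)
  also have "\<dots> \<le> (\<Sum>k<n. norm (v ^ k * (v * a * w - a) * w ^ k))" by (rule norm_sum)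
  also have "\<dots> \<le> (\<Sum>k<n. 2 * norm a * (exp (norm m / real n) - 1))"
  proof (rule sum_mono)
    fix k
    have "norm (v ^ k * (v * a * w - a) * w ^ k) \<le> norm (v ^ k) * norm (v * a * w - a) * norm (w ^ k)"
      by (rule norm_mult3)
    also have "\<dots> \<le> 1 * norm (v * a * w - a) * 1"
      by (intro mult_mono vk wk) auto
    finally show "norm (v ^ k * (v * a * w - a) * w ^ k) \<le> 2 * norm a * (exp (norm m / real n) - 1)"
      using step by simp
  qed
  finally show ?thesis by (simp add: algebra_simps)
qed

lemma exp_minus_one_le: "0 \<le> (y::real) \<Longrightarrow> exp y - 1 \<le> y * exp y"
proof -
  assume "0 \<le> y"
  have "1 - y \<le> exp (- y)" using exp_ge_add_one_self[of "- y"] by simp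
  hence "(1 - y) * exp y \<le> exp (- y) * exp y" by (intro mult_right_mono) auto
  also have "\<dots> = 1" by (simp add: exp_minus_inverse mult.commute)
  finally show ?thesis by (simp add: algebra_simps)
qed

lemma conj_bound:
  fixes m a :: "'a::{real_normed_algebra_1,banach}"
  assumes U: "\<And>r::real. norm (exp (r *\<^sub>R m)) \<le> 1"
  shows "norm (exp m * a * exp (- m) - a) \<le> 2 * norm a * norm m"
proof -
  have lim: "(\<lambda>n. 2 * norm a * (norm m * exp (norm m / real n))) \<longlonglongrightarrow> 2 * norm a * (norm m * exp 0)"
    by (intro tendsto_mult tendsto_const tendsto_exp tendsto_divide_0[OF tendsto_const] filterlim_at_top_imp_at_infinity filterlim_real_sequentially)
  have "norm (exp m * a * exp (- m) - a) \<le> 2 * norm a * (norm m * exp (norm m / real n))" if "n \<ge> 1" for n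
  proof -
    have n: "n > 0" using that by simp
    have "real n * (exp (norm m / real n) - 1) \<le> real n * ((norm m / real n) * exp (norm m / real n))"
      by (intro mult_left_mono exp_minus_one_le) auto
    also have "\<dots> = norm m * exp (norm m / real n)" using n by simp
    finally have "real n * (exp (norm m / real n) - 1) \<le> norm m * exp (norm m / real n)" .
    hence "2 * norm a * (real n * (exp (norm m / real n) - 1)) \<le> 2 * norm a * (norm m * exp (norm m / real n))"
      by (intro mult_left_mono) auto
    thus ?thesis using conj_bound_n[OF U n, of a] by linarith
  qed
  hence ev: "\<forall>\<^sub>F n in sequentially. norm (exp m * a * exp (- m) - a) \<le> 2 * norm a * (norm m * exp (norm m / real n))"
    by (intro eventually_sequentiallyI[of 1]) auto
  show ?thesis
    using tendsto_lowerbound[OF lim ev] by simp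
qed

lemma mv_scaleR: "(M::complex^'n^'m) *v (c *\<^sub>R x) = c *\<^sub>R (M *v x)"
  by (simp add: vec_eq_iff matrix_vector_mult_def scaleR_sum_right)

lemma bl_mv: "bounded_linear (\<lambda>x::complex^'n. (M::complex^'n^'m) *v x)"
  using linear_conv_bounded_linear linearI matrix_vector_right_distrib mv_scaleR by blast

lemma mv_axis: "((M::complex^'n^'m) *v axis j 1) $ i = M $ i $ j"
proof -
  have "((M::complex^'n^'m) *v axis j 1) $ i = (\<Sum>k\<in>UNIV. M $ i $ k * (if k = j then 1 else 0))"
    by (simp add: matrix_vector_mult_def axis_def)
  also have "\<dots> = (\<Sum>k\<in>UNIV. if k = j then M $ i $ k else 0)"
    by (rule sum.cong) auto
  finally show ?thesis by simp
qed

lemma norm_axis_c: "norm (axis j (1::complex)) = 1"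
proof -
  have "(\<Sum>i\<in>UNIV. (norm (axis j (1::complex) $ i))\<^sup>2) = (\<Sum>i\<in>UNIV. if i = j then 1 else 0)"
    by (intro sum.cong) (auto simp: axis_def)
  thus ?thesis by (simp add: norm_vec_def L2_set_def)
qed

lemma norm_vec_le_sum: "norm (x::'a::real_normed_vector^'n) \<le> (\<Sum>i\<in>UNIV. norm (x$i))"
  by (simp add: norm_vec_def L2_set_le_sum)

definition Lm :: "('v::finite,'q::finite) op \<Rightarrow> (complex^('v\<Rightarrow>'q)) endo" where
  "Lm M = Abs_endo (Blinfun (\<lambda>x. M *v x))"

lemma Lm_apply: "blinfun_apply (Rep_endo (Lm M)) x = M *v x"
  by (simp add: Lm_def bounded_linear_Blinfun_apply[OF bl_mv])

lemma endo_eqI: "(\<And>x. blinfun_apply (Rep_endo a) x = blinfun_apply (Rep_endo b) x) \<Longrightarrow> a = b"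
  by (metis blinfun_eqI Rep_endo_inject)

lemma Lm_mult: "Lm (M ** N) = Lm M * Lm N"
  by (rule endo_eqI) (simp add: Lm_apply matrix_vector_mul_assoc)

lemma Lm_one: "Lm (mat 1) = 1"
  by (rule endo_eqI) (simp add: Lm_apply)

lemma Lm_add: "Lm (M + N) = Lm M + Lm N"
  by (rule endo_eqI) (simp add: Lm_apply blinfun.bilinear_simps matrix_vector_mult_add_rdistrib)

lemma Lm_diff: "Lm (M - N) = Lm M - Lm N"
  by (rule endo_eqI) (simp add: Lm_apply blinfun.bilinear_simps matrix_vector_mult_diff_rdistrib)

lemma Lm_uminus: "Lm (- M) = - Lm M"
  using Lm_diff[of 0 M] Lm_diff[of 0 0] by simp

lemma Lm_zero: "Lm 0 = 0"
  using Lm_diff[of 0 0] by simp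

lemma Lm_scaleR: "Lm (r *\<^sub>R M) = r *\<^sub>R Lm M"
  by (rule endo_eqI) (simp add: Lm_apply blinfun.bilinear_simps vec_eq_iff matrix_vector_mult_def scaleR_sum_right)

lemma Lm_sum: "Lm (sum f S) = (\<Sum>x\<in>S. Lm (f x))"
  by (induction S rule: infinite_finite_induct) (simp_all add: Lm_add Lm_zero)

lemma bl_Lm: "bounded_linear Lm"
  using linear_conv_bounded_linear linearI Lm_add Lm_scaleR by blast

lemma Lm_opow: "Lm (opow M n) = Lm M ^ n"
  by (induction n) (simp_all add: Lm_one Lm_mult)

lemma opnorm_Lm: "opnorm M = norm (Lm M)"
proof -
  have "blinfun_apply (Rep_endo (Lm M)) = (\<lambda>x. M *v x)" by (rule ext) (simp add: Lm_apply)
  thus ?thesis by (simp add: opnorm_def norm_endo_def norm_blinfun.rep_eq)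
qed

lemma Lm_inj: "Lm M = Lm N \<Longrightarrow> M = N"
proof -
  assume "Lm M = Lm N"
  hence "M *v x = N *v x" for x by (metis Lm_apply)
  hence "(M *v axis j 1) $ i = (N *v axis j 1) $ i" for i j by simp
  hence "M $ i $ j = N $ i $ j" for i j by (simp only: mv_axis)
  thus "M = N" by (simp add: vec_eq_iff)
qed

definition Rm :: "(complex^('v::finite\<Rightarrow>'q::finite)) endo \<Rightarrow> ('v,'q) op" where
  "Rm T = (\<chi> i j. (blinfun_apply (Rep_endo T) (axis j 1)) $ i)"

lemma Rm_Lm: "Rm (Lm M) = M"
  by (simp add: Rm_def Lm_apply vec_eq_iff mv_axis)

lemma bl_Rm: "bounded_linear (Rm :: (complex^('v::finite\<Rightarrow>'q::finite)) endo \<Rightarrow> _)"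
proof (rule bounded_linear_intro[where K = "real CARD('v\<Rightarrow>'q) * real CARD('v\<Rightarrow>'q)"])
  fix x y :: "(complex^('v\<Rightarrow>'q)) endo" and r :: real
  show "Rm (x + y) = Rm x + Rm y" by (simp add: Rm_def vec_eq_iff blinfun.bilinear_simps)
  show "Rm (r *\<^sub>R x) = r *\<^sub>R Rm x" by (simp add: Rm_def vec_eq_iff blinfun.bilinear_simps)
  have e: "norm (Rm x $ i $ j) \<le> norm x" for i j
  proof -
    have "norm (Rm x $ i $ j) = norm ((blinfun_apply (Rep_endo x) (axis j 1)) $ i)" by (simp add: Rm_def)
    also have "\<dots> \<le> norm (blinfun_apply (Rep_endo x) (axis j 1))" by (rule Finite_Cartesian_Product.norm_nth_le)
    also have "\<dots> \<le> norm (Rep_endo x) * norm (axis j (1::complex))" by (rule norm_blinfun)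
    finally show ?thesis by (simp add: norm_axis_c norm_endo_def)
  qed
  have "norm (Rm x) \<le> (\<Sum>i\<in>UNIV. norm (Rm x $ i))" by (rule norm_vec_le_sum)
  also have "\<dots> \<le> (\<Sum>i\<in>UNIV. \<Sum>j\<in>UNIV. norm (Rm x $ i $ j))" by (intro sum_mono norm_vec_le_sum)
  also have "\<dots> \<le> (\<Sum>i\<in>(UNIV::('v\<Rightarrow>'q) set). \<Sum>j\<in>(UNIV::('v\<Rightarrow>'q) set). norm x)" by (intro sum_mono e)
  finally show "norm (Rm x) \<le> norm x * (real CARD('v\<Rightarrow>'q) * real CARD('v\<Rightarrow>'q))" by (simp add: algebra_simps)
qed

lemma mexp_sums: "(\<lambda>n. (1 / fact n) *\<^sub>R opow M n) sums mexp M"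
  and Lm_mexp: "Lm (mexp M) = exp (Lm M)"
proof -
  have sE: "(\<lambda>n. Lm M ^ n /\<^sub>R fact n) sums exp (Lm M)"
    unfolding exp_def by (rule summable_sums[OF summable_exp_generic])
  have t: "Lm M ^ n /\<^sub>R fact n = Lm ((1 / fact n) *\<^sub>R opow M n)" for n
    by (simp add: Lm_scaleR Lm_opow inverse_eq_divide)
  have "(\<lambda>n. Rm (Lm M ^ n /\<^sub>R fact n)) sums Rm (exp (Lm M))"
    by (rule bounded_linear.sums[OF bl_Rm sE])
  hence s: "(\<lambda>n. (1 / fact n) *\<^sub>R opow M n) sums Rm (exp (Lm M))" by (simp only: t Rm_Lm)
  have "mexp M = Rm (exp (Lm M))" unfolding mexp_def using sums_unique[OF s] by simp
  thus "(\<lambda>n. (1 / fact n) *\<^sub>R opow M n) sums mexp M" using s by simp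
  hence "(\<lambda>n. Lm ((1 / fact n) *\<^sub>R opow M n)) sums Lm (mexp M)"
    by (rule bounded_linear.sums[OF bl_Lm])
  hence "(\<lambda>n. Lm M ^ n /\<^sub>R fact n) sums Lm (mexp M)" by (simp only: t)
  thus "Lm (mexp M) = exp (Lm M)" using sE sums_unique2 by blast
qed

lemma adj_add: "adj (A + B) = adj A + adj B"
  by (simp add: vec_eq_iff adj_def)

lemma adj_scaleR: "adj (r *\<^sub>R A) = r *\<^sub>R adj A"
  by (simp add: vec_eq_iff adj_def)

lemma bl_adj: "bounded_linear (adj :: ('v::finite,'q::finite) op \<Rightarrow> _)"
  using linear_conv_bounded_linear linearI adj_add adj_scaleR by blast

lemma adj_mult: "adj (A ** B) = adj B ** adj A"
  by (simp add: vec_eq_iff adj_def matrix_matrix_mult_def mult.commute)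

lemma adj_mat1: "adj (mat 1 :: ('v::finite,'q::finite) op) = mat 1"
  by (auto simp: vec_eq_iff adj_def mat_def)

lemma adj_sum: "adj (sum f S) = (\<Sum>x\<in>S. adj (f x))"
  by (simp add: vec_eq_iff adj_def)

lemma opow_comm: "opow M n ** M = M ** opow M n"
  by (induction n) (simp_all add: matrix_mul_assoc[symmetric])

lemma adj_opow: "adj (opow M n) = opow (adj M) n"
  by (induction n) (simp_all add: adj_mult adj_mat1 opow_comm)

lemma adj_mexp: "adj (mexp M) = mexp (adj M)"
proof -
  have "(\<lambda>n. adj ((1 / fact n) *\<^sub>R opow M n)) sums adj (mexp M)"
    by (rule bounded_linear.sums[OF bl_adj mexp_sums])
  hence "(\<lambda>n. (1 / fact n) *\<^sub>R opow (adj M) n) sums adj (mexp M)"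
    by (simp add: adj_scaleR adj_opow)
  thus ?thesis using mexp_sums[of "adj M"] sums_unique2 by blast
qed

lemma csmul_mv: "(csmul c M) *v x = (\<chi> i. c * (M *v x) $ i)"
  by (simp add: vec_eq_iff matrix_vector_mult_def csmul_def sum_distrib_left mult.assoc)

lemma mv_cmult: "(M::complex^'n^'m) *v (\<chi> k. c * x $ k) = (\<chi> i. c * (M *v x) $ i)"
  by (auto simp: vec_eq_iff matrix_vector_mult_def sum_distrib_left mult_ac intro!: sum.cong)

lemma Lm_csmul_left: "Lm (csmul c M) = Lm (csmul c (mat 1)) * Lm M"
  by (rule endo_eqI) (simp add: Lm_apply csmul_mv)

lemma Lm_csmul_right: "Lm (csmul c M) = Lm M * Lm (csmul c (mat 1))"
  by (rule endo_eqI) (simp add: Lm_apply csmul_mv mv_cmult)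

lemma csmul_neg: "csmul (- c) M = - csmul c M"
  by (simp add: vec_eq_iff csmul_def)

lemma csmul_real: "csmul (complex_of_real r * c) M = r *\<^sub>R csmul c M"
  apply (subst vec_eq_iff, rule allI)+
  apply (simp only: vector_scaleR_component)
  apply (simp add: csmul_def scaleR_conv_of_real mult.assoc)
  done

lemma adj_csmul: "adj (csmul c M) = csmul (cnj c) (adj M)"
  by (simp add: vec_eq_iff csmul_def adj_def)

lemma norm_cmult_vec: "norm (\<chi> i. c * (y::complex^'n) $ i) = cmod c * norm y"
  by (simp add: norm_vec_def L2_set_def norm_mult power_mult_distrib sum_distrib_left[symmetric] real_sqrt_mult)

lemma norm_scal: "norm (Lm (csmul c (mat 1) :: ('v::finite,'q::finite) op)) \<le> cmod c"
  unfolding norm_endo_def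
  by (rule norm_blinfun_bound) (simp_all add: Lm_apply csmul_mv norm_cmult_vec)

lemma inner_c: "inner (z::complex) w = Re (z * cnj w)"
  by (simp add: inner_complex_def)

lemma inner_adj: "inner (M *v x) y = inner x (adj M *v y)"
proof -
  have "inner (M *v x) y = Re (\<Sum>i\<in>UNIV. \<Sum>j\<in>UNIV. M $ i $ j * x $ j * cnj (y $ i))"
    by (simp add: inner_vec_def inner_c matrix_vector_mult_def sum_distrib_right Re_sum)
  also have "\<dots> = Re (\<Sum>j\<in>UNIV. \<Sum>i\<in>UNIV. M $ i $ j * x $ j * cnj (y $ i))"
    by (subst sum.swap) simp
  also have "\<dots> = inner x (adj M *v y)"
    by (simp add: inner_vec_def inner_c matrix_vector_mult_def adj_def sum_distrib_left Re_sum mult_ac)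
  finally show ?thesis .
qed

lemma unitary_norm:
  assumes "adj U ** U = mat 1"
  shows "norm (U *v x) = norm x"
proof -
  have "inner (U *v x) (U *v x) = inner x (adj U *v (U *v x))" by (rule inner_adj)
  also have "\<dots> = inner x x" by (simp add: matrix_vector_mul_assoc assms)
  finally show ?thesis by (simp add: norm_eq_sqrt_inner)
qed

lemma norm_Lm_unitary:
  assumes "adj U ** U = mat 1"
  shows "norm (Lm U) \<le> 1"
  unfolding norm_endo_def
  by (rule norm_blinfun_bound) (simp_all add: Lm_apply unitary_norm[OF assms])

lemma exp_unitary:
  assumes "self_adjoint B"
  shows "norm (exp (Lm (csmul (\<i> * complex_of_real s) B))) \<le> 1"
proof -
  define M where "M = csmul (\<i> * complex_of_real s) B"
  have aM: "adj M = - M"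
    using assms by (simp add: M_def adj_csmul self_adjoint_def csmul_neg)
  have "Lm (adj (mexp M) ** mexp M) = exp (- Lm M) * exp (Lm M)"
    by (simp add: adj_mexp aM Lm_mult Lm_mexp Lm_uminus)
  also have "\<dots> = 1" using exp_minus_inverse[of "- Lm M"] by simp
  finally have "adj (mexp M) ** mexp M = mat 1" using Lm_one Lm_inj by metis
  hence "norm (Lm (mexp M)) \<le> 1" by (rule norm_Lm_unitary)
  thus ?thesis by (simp add: Lm_mexp M_def)
qed

lemma sum_single:
  assumes "finite S" "a \<in> S" "\<And>x. x \<in> S \<Longrightarrow> x \<noteq> a \<Longrightarrow> f x = 0"
  shows "sum f S = f a"
proof -
  have "sum f S = f a + sum f (S - {a})" using assms(1,2) by (rule sum.remove)
  also have "sum f (S - {a}) = 0" using assms(3) by (intro sum.neutral) auto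
  finally show ?thesis by simp
qed

lemma local_commute:
  fixes A P :: "('v::finite,'q::finite) op"
  assumes A: "local_op X A" and P: "local_op Z P" and XZ: "X \<inter> Z = {}"
  shows "A ** P = P ** A"
proof -
  have A0: "\<And>\<sigma> \<tau> v. v \<notin> X \<Longrightarrow> \<sigma> v \<noteq> \<tau> v \<Longrightarrow> A $ \<sigma> $ \<tau> = 0"
    using A unfolding local_op_def by blast
  have P0: "\<And>\<sigma> \<tau> v. v \<notin> Z \<Longrightarrow> \<sigma> v \<noteq> \<tau> v \<Longrightarrow> P $ \<sigma> $ \<tau> = 0"
    using P unfolding local_op_def by blast
  have A1: "\<And>\<sigma> \<tau> \<sigma>' \<tau>'. (\<forall>v\<in>X. \<sigma> v = \<sigma>' v \<and> \<tau> v = \<tau>' v) \<Longrightarrow>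
        (\<forall>v. v \<notin> X \<longrightarrow> \<sigma> v = \<tau> v \<and> \<sigma>' v = \<tau>' v) \<Longrightarrow> A $ \<sigma> $ \<tau> = A $ \<sigma>' $ \<tau>'"
    using A unfolding local_op_def by blast
  have P1: "\<And>\<sigma> \<tau> \<sigma>' \<tau>'. (\<forall>v\<in>Z. \<sigma> v = \<sigma>' v \<and> \<tau> v = \<tau>' v) \<Longrightarrow>
        (\<forall>v. v \<notin> Z \<longrightarrow> \<sigma> v = \<tau> v \<and> \<sigma>' v = \<tau>' v) \<Longrightarrow> P $ \<sigma> $ \<tau> = P $ \<sigma>' $ \<tau>'"
    using P unfolding local_op_def by blast
  have "(A ** P) $ \<sigma> $ \<tau> = (P ** A) $ \<sigma> $ \<tau>" for \<sigma> \<tau>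
  proof -
    have l: "(A ** P) $ \<sigma> $ \<tau> = (\<Sum>\<rho>\<in>UNIV. A $ \<sigma> $ \<rho> * P $ \<rho> $ \<tau>)"
      by (simp add: matrix_matrix_mult_def)
    have r: "(P ** A) $ \<sigma> $ \<tau> = (\<Sum>\<rho>\<in>UNIV. P $ \<sigma> $ \<rho> * A $ \<rho> $ \<tau>)"
      by (simp add: matrix_matrix_mult_def)
    show ?thesis
    proof (cases "\<exists>v. v \<notin> X \<and> v \<notin> Z \<and> \<sigma> v \<noteq> \<tau> v")
      case True
      then obtain v where v: "v \<notin> X" "v \<notin> Z" "\<sigma> v \<noteq> \<tau> v" by blast
      have z1: "A $ \<sigma> $ \<rho> * P $ \<rho> $ \<tau> = 0" for \<rho>
        using A0[of v \<sigma> \<rho>] P0[of v \<rho> \<tau>] v by (cases "\<sigma> v = \<rho> v") auto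
      have z2: "P $ \<sigma> $ \<rho> * A $ \<rho> $ \<tau> = 0" for \<rho>
        using A0[of v \<rho> \<tau>] P0[of v \<sigma> \<rho>] v by (cases "\<sigma> v = \<rho> v") auto
      show ?thesis unfolding l r by (simp only: z1 z2)
    next
      case False
      define \<rho>1 where "\<rho>1 = (\<lambda>v. if v \<in> X then \<tau> v else \<sigma> v)"
      define \<rho>2 where "\<rho>2 = (\<lambda>v. if v \<in> X then \<sigma> v else \<tau> v)"
      have s1: "(\<Sum>\<rho>\<in>UNIV. A $ \<sigma> $ \<rho> * P $ \<rho> $ \<tau>) = A $ \<sigma> $ \<rho>1 * P $ \<rho>1 $ \<tau>"
      proof (rule sum_single)
        fix \<rho> assume "\<rho> \<noteq> \<rho>1"
        then obtain v where v: "\<rho> v \<noteq> \<rho>1 v" by (auto simp: fun_eq_iff)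
        show "A $ \<sigma> $ \<rho> * P $ \<rho> $ \<tau> = 0"
        proof (cases "v \<in> X")
          case True
          hence "v \<notin> Z" using XZ by blast
          thus ?thesis using P0[of v \<rho> \<tau>] v True by (simp add: \<rho>1_def)
        next
          case False
          thus ?thesis using A0[of v \<sigma> \<rho>] v by (simp add: \<rho>1_def)
        qed
      qed auto
      have s2: "(\<Sum>\<rho>\<in>UNIV. P $ \<sigma> $ \<rho> * A $ \<rho> $ \<tau>) = P $ \<sigma> $ \<rho>2 * A $ \<rho>2 $ \<tau>"
      proof (rule sum_single)
        fix \<rho> assume "\<rho> \<noteq> \<rho>2"
        then obtain v where v: "\<rho> v \<noteq> \<rho>2 v" by (auto simp: fun_eq_iff)
        show "P $ \<sigma> $ \<rho> * A $ \<rho> $ \<tau> = 0"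
        proof (cases "v \<in> X")
          case True
          hence "v \<notin> Z" using XZ by blast
          thus ?thesis using P0[of v \<sigma> \<rho>] v True by (auto simp: \<rho>2_def)
        next
          case False
          thus ?thesis using A0[of v \<rho> \<tau>] v by (auto simp: \<rho>2_def)
        qed
      qed auto
      have eA: "A $ \<sigma> $ \<rho>1 = A $ \<rho>2 $ \<tau>"
        by (rule A1) (auto simp: \<rho>1_def \<rho>2_def)
      have eP: "P $ \<rho>1 $ \<tau> = P $ \<sigma> $ \<rho>2"
        by (rule P1) (use False XZ in \<open>auto simp: \<rho>1_def \<rho>2_def\<close>)
      show ?thesis using l r s1 s2 eA eP by (simp add: mult.commute)
    qed
  qed
  thus ?thesis by (simp add: vec_eq_iff)
qed

lemma exp_commute:
  fixes x y :: "'a::{real_normed_algebra_1,banach}"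
  assumes "x * y = y * x"
  shows "exp x * y = y * exp x"
proof -
  have s: "summable (\<lambda>n. x ^ n /\<^sub>R fact n)" by (rule summable_exp_generic)
  have c: "x ^ n /\<^sub>R fact n * y = y * (x ^ n /\<^sub>R fact n)" for n
    using power_commuting_commutes[OF assms, of n] by simp
  have "exp x * y = (\<Sum>n. x ^ n /\<^sub>R fact n * y)" unfolding exp_def by (rule suminf_mult2[OF s])
  also have "\<dots> = (\<Sum>n. y * (x ^ n /\<^sub>R fact n))" by (simp only: c)
  also have "\<dots> = y * exp x" unfolding exp_def by (rule suminf_mult[OF s])
  finally show ?thesis .
qed

lemma comm_sum_right:
  fixes a :: "'a::ring"
  shows "(\<And>x. x \<in> S \<Longrightarrow> a * f x = f x * a) \<Longrightarrow> a * sum f S = sum f S * a"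
  by (simp add: sum_distrib_left sum_distrib_right)

lemma comm4:
  fixes b c e :: "'a::ring"
  assumes "b * e = e * b"
  shows "e * b * (e * c) = e * e * (b * c)"
proof -
  have "e * b * (e * c) = e * (b * e) * c" by (simp only: mult.assoc)
  also have "\<dots> = e * (e * b) * c" by (simp only: assms)
  finally show ?thesis by (simp only: mult.assoc)
qed

lemma comm_prod:
  fixes a b e :: "'a::ring"
  assumes "a * e = e * a" "a * b = b * a"
  shows "a * (e * b) = (e * b) * a"
proof -
  have "a * (e * b) = (a * e) * b" by (simp only: mult.assoc)
  also have "\<dots> = e * (a * b)" by (simp only: assms(1) mult.assoc)
  also have "\<dots> = (e * b) * a" by (simp only: assms(2) mult.assoc)
  finally show ?thesis .
qed

lemma csmul_add: "csmul c (M + N) = csmul c M + csmul c N"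
  by (simp add: vec_eq_iff csmul_def distrib_left)

lemma self_adjoint_sum:
  assumes "interaction \<Psi>"
  shows "self_adjoint (sum \<Psi> S)"
  using assms by (simp add: self_adjoint_def adj_sum interaction_def)

lemma norm_exp_Lm:
  assumes "self_adjoint B"
  shows "norm (exp (Lm (csmul (\<i> * complex_of_real s) B))) \<le> 1"
  by (rule exp_unitary[OF assms])

lemma main_part1:
  fixes \<Psi> :: "'v::finite set \<Rightarrow> ('v, 'q::finite) op"
  assumes I: "interaction \<Psi>" and C: "commuting \<Psi>" and XL: "X \<subseteq> L'" and A: "local_op X A"
  shows "opnorm (dyn \<Psi> UNIV t A - dyn \<Psi> L' t A)
              \<le> 2 * opnorm A * \<bar>t\<bar> *
                 (\<Sum>Z\<in>{Z. Z \<inter> X \<noteq> {} \<and> Z \<inter> (UNIV - L') \<noteq> {}}. opnorm (\<Psi> Z))"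
proof -
  define S0 where "S0 = {Z. Z \<subseteq> L'}"
  define S1 where "S1 = {Z. Z \<inter> X \<noteq> {} \<and> Z \<inter> (UNIV - L') \<noteq> {}}"
  define S2 where "S2 = {Z. \<not> Z \<subseteq> L' \<and> Z \<inter> X = {}}"
  have fin: "finite (S :: 'v set set)" for S by (rule finite_subset[OF subset_UNIV]) simp
  have U: "(UNIV :: 'v set set) = S0 \<union> S1 \<union> S2" unfolding S0_def S1_def S2_def by auto
  have d01: "S0 \<inter> S1 = {}" and d02: "(S0 \<union> S1) \<inter> S2 = {}" unfolding S0_def S1_def S2_def by auto
  define H0 where "H0 = sum \<Psi> S0"
  define H1 where "H1 = sum \<Psi> S1"
  define H2 where "H2 = sum \<Psi> S2"
  have hamU: "ham \<Psi> UNIV = H0 + H1 + H2"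
  proof -
    have "ham \<Psi> UNIV = sum \<Psi> (S0 \<union> S1 \<union> S2)" unfolding ham_def by (simp add: U[symmetric])
    also have "\<dots> = sum \<Psi> (S0 \<union> S1) + sum \<Psi> S2" by (rule sum.union_disjoint[OF fin fin d02])
    also have "sum \<Psi> (S0 \<union> S1) = sum \<Psi> S0 + sum \<Psi> S1" by (rule sum.union_disjoint[OF fin fin d01])
    finally show ?thesis by (simp add: H0_def H1_def H2_def)
  qed
  have hamL: "ham \<Psi> L' = H0" unfolding ham_def H0_def S0_def by simp
  define c where "c = \<i> * complex_of_real t"
  define E where "E = Lm (csmul c (mat 1) :: ('v,'q) op)"
  define p where "p Z = Lm (\<Psi> Z)" for Z
  define a where "a = Lm A"
  define x0 where "x0 = Lm (csmul c H0)"
  define x1 where "x1 = Lm (csmul c H1)"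
  define x2 where "x2 = Lm (csmul c H2)"
  have pp: "p Z * p Z' = p Z' * p Z" for Z Z'
  proof -
    have "\<Psi> Z ** \<Psi> Z' = \<Psi> Z' ** \<Psi> Z" using C unfolding commuting_def by blast
    thus ?thesis unfolding p_def Lm_mult[symmetric] by (rule arg_cong)
  qed
  have EL: "E * Lm M = Lm M * E" for M
    unfolding E_def Lm_csmul_left[symmetric] Lm_csmul_right[symmetric] ..
  have hsum: "Lm (sum \<Psi> S) = sum p S" for S by (simp add: Lm_sum p_def)
  have xk: "Lm (csmul c (sum \<Psi> S)) = E * sum p S" for S
    unfolding E_def Lm_csmul_left[of c "sum \<Psi> S"] hsum ..
  have Esum: "E * sum p S = sum p S * E" for S using EL[of "sum \<Psi> S"] by (simp add: hsum)
  have psum: "p Z * sum p S = sum p S * p Z" for Z S by (rule comm_sum_right) (rule pp)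
  have sumsum: "sum p S * sum p S' = sum p S' * sum p S" for S S'
    by (rule comm_sum_right) (rule psum[symmetric])
  have xx: "Lm (csmul c (sum \<Psi> S)) * Lm (csmul c (sum \<Psi> S')) = Lm (csmul c (sum \<Psi> S')) * Lm (csmul c (sum \<Psi> S))" for S S'
  proof -
    have "E * sum p S * (E * sum p S') = E * E * (sum p S * sum p S')"
      by (rule comm4) (rule Esum[symmetric])
    also have "\<dots> = E * E * (sum p S' * sum p S)" by (simp only: sumsum)
    also have "\<dots> = E * sum p S' * (E * sum p S)"
      by (rule comm4[symmetric]) (rule Esum[symmetric])
    finally show ?thesis by (simp add: xk)
  qed
  have x01: "x0 * x1 = x1 * x0" unfolding x0_def x1_def H0_def H1_def by (rule xx)
  have x02: "x0 * x2 = x2 * x0" unfolding x0_def x2_def H0_def H2_def by (rule xx)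
  have x12: "x1 * x2 = x2 * x1" unfolding x1_def x2_def H1_def H2_def by (rule xx)
  have pa: "a * p Z = p Z * a" if "Z \<in> S2" for Z
  proof -
    have "X \<inter> Z = {}" using that unfolding S2_def by auto
    hence "A ** \<Psi> Z = \<Psi> Z ** A" using local_commute[OF A] I unfolding interaction_def by blast
    thus ?thesis unfolding a_def p_def Lm_mult[symmetric] by (rule arg_cong)
  qed
  have ax2: "a * x2 = x2 * a"
  proof -
    have "a * sum p S2 = sum p S2 * a" by (rule comm_sum_right) (rule pa)
    moreover have "a * E = E * a" unfolding a_def using EL[of A] by simp
    ultimately show ?thesis unfolding x2_def H2_def xk by (intro comm_prod)
  qed
  have Hx: "Lm (csmul c (ham \<Psi> UNIV)) = x0 + x1 + x2"
    by (simp add: hamU csmul_add Lm_add x0_def x1_def x2_def)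
  have Hxm: "Lm (csmul (- c) (ham \<Psi> UNIV)) = - x2 + - x1 + - x0"
    unfolding hamU csmul_add csmul_neg Lm_add Lm_uminus x0_def x1_def x2_def by (simp add: algebra_simps)
  have e1: "exp (x0 + x1 + x2) = exp x0 * exp x1 * exp x2"
  proof -
    have "(x0 + x1) * x2 = x2 * (x0 + x1)" by (simp add: ring_distribs x02 x12)
    hence "exp (x0 + x1 + x2) = exp (x0 + x1) * exp x2" by (rule exp_add_commuting)
    thus ?thesis by (simp add: exp_add_commuting[OF x01])
  qed
  have e2: "exp (- x2 + - x1 + - x0) = exp (- x2) * exp (- x1) * exp (- x0)"
  proof -
    have c0: "(- x2 + - x1) * - x0 = - x0 * (- x2 + - x1)" by (simp add: ring_distribs x02 x01)
    have c1: "- x2 * - x1 = - x1 * - x2" by (simp add: x12)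
    have h1: "exp (- x2 + - x1 + - x0) = exp (- x2 + - x1) * exp (- x0)" by (rule exp_add_commuting[OF c0])
    have h2: "exp (- x2 + - x1) = exp (- x2) * exp (- x1)" by (rule exp_add_commuting[OF c1])
    show ?thesis by (simp only: h1 h2)
  qed
  have x2inv: "exp x2 * exp (- x2) = 1" by (rule exp_minus_inverse)
  have ex2a: "exp x2 * a = a * exp x2" by (rule exp_commute) (simp add: ax2)
  have LU: "Lm (dyn \<Psi> UNIV t A) = exp x0 * (exp x1 * a * exp (- x1)) * exp (- x0)"
  proof -
    have "Lm (dyn \<Psi> UNIV t A) = exp (Lm (csmul c (ham \<Psi> UNIV))) * a * exp (Lm (csmul (- c) (ham \<Psi> UNIV)))"
      unfolding dyn_def c_def a_def by (simp add: Lm_mult Lm_mexp)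
    also have "\<dots> = exp x0 * exp x1 * exp x2 * a * (exp (- x2) * exp (- x1) * exp (- x0))"
      unfolding Hx Hxm e1 e2 ..
    also have "\<dots> = exp x0 * exp x1 * (exp x2 * a) * exp (- x2) * exp (- x1) * exp (- x0)"
      by (simp only: mult.assoc)
    also have "\<dots> = exp x0 * exp x1 * a * (exp x2 * exp (- x2)) * exp (- x1) * exp (- x0)"
      by (simp only: ex2a mult.assoc)
    also have "\<dots> = exp x0 * (exp x1 * a * exp (- x1)) * exp (- x0)"
      by (simp only: x2inv mult.assoc mult_1_right mult_1_left)
    finally show ?thesis .
  qed
  have LL: "Lm (dyn \<Psi> L' t A) = exp x0 * a * exp (- x0)"
  proof -
    have "Lm (dyn \<Psi> L' t A) = exp (Lm (csmul c (ham \<Psi> L'))) * a * exp (Lm (csmul (- c) (ham \<Psi> L')))"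
      unfolding dyn_def c_def a_def by (simp add: Lm_mult Lm_mexp)
    thus ?thesis by (simp only: hamL csmul_neg Lm_uminus x0_def)
  qed
  have sa0: "self_adjoint H0" and sa1: "self_adjoint H1"
    unfolding H0_def H1_def by (rule self_adjoint_sum[OF I])+
  have n0: "norm (exp x0) \<le> 1" unfolding x0_def c_def by (rule exp_unitary[OF sa0])
  have n0m: "norm (exp (- x0)) \<le> 1"
  proof -
    have "- x0 = Lm (csmul (\<i> * complex_of_real (- t)) H0)"
      by (simp add: x0_def c_def Lm_uminus[symmetric] csmul_neg[symmetric])
    thus ?thesis using exp_unitary[OF sa0, of "- t"] by simp
  qed
  have U1: "norm (exp (r *\<^sub>R x1)) \<le> 1" for r
  proof -
    have "r *\<^sub>R x1 = Lm (csmul (\<i> * complex_of_real (r * t)) H1)"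
      by (simp add: x1_def c_def Lm_scaleR[symmetric] csmul_real[symmetric] mult_ac)
    thus ?thesis using exp_unitary[OF sa1, of "r * t"] by simp
  qed
  have nx1: "norm x1 \<le> \<bar>t\<bar> * (\<Sum>Z\<in>S1. opnorm (\<Psi> Z))"
  proof -
    have "norm x1 = norm (E * sum p S1)" unfolding x1_def H1_def xk ..
    also have "\<dots> \<le> norm E * norm (sum p S1)" by (rule norm_mult_ineq)
    also have "\<dots> \<le> \<bar>t\<bar> * (\<Sum>Z\<in>S1. opnorm (\<Psi> Z))"
    proof (rule mult_mono)
      show "norm E \<le> \<bar>t\<bar>" using norm_scal[of c] by (simp add: E_def c_def norm_mult)
      show "norm (sum p S1) \<le> (\<Sum>Z\<in>S1. opnorm (\<Psi> Z))"
        using norm_sum[of p S1] by (simp add: p_def opnorm_Lm)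
    qed auto
    finally show ?thesis .
  qed
  have "opnorm (dyn \<Psi> UNIV t A - dyn \<Psi> L' t A) = norm (exp x0 * (exp x1 * a * exp (- x1) - a) * exp (- x0))"
    by (simp add: opnorm_Lm Lm_diff LU LL algebra_simps)
  also have "\<dots> \<le> norm (exp x0) * norm (exp x1 * a * exp (- x1) - a) * norm (exp (- x0))"
    by (rule norm_mult3)
  also have "\<dots> \<le> 1 * norm (exp x1 * a * exp (- x1) - a) * 1"
    by (intro mult_mono n0 n0m) auto
  also have "\<dots> \<le> 2 * norm a * norm x1" using conj_bound[OF U1] by simp
  also have "\<dots> \<le> 2 * norm a * (\<bar>t\<bar> * (\<Sum>Z\<in>S1. opnorm (\<Psi> Z)))"
    by (intro mult_left_mono nx1) auto
  finally show ?thesis by (simp add: a_def opnorm_Lm S1_def mult_ac)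
qed

lemma opnorm_nonneg: "opnorm M \<ge> 0" by (simp add: opnorm_Lm)

lemma part2_bound:
  fixes \<Psi> :: "'v::finite set \<Rightarrow> ('v, 'q::finite) op" and d :: "'v \<Rightarrow> 'v \<Rightarrow> real"
  assumes d: "\<forall>x y. d x y \<ge> 0" and F: "decaying F" and XL: "X \<subseteq> L'"
  shows "(\<Sum>Z\<in>{Z. Z \<inter> X \<noteq> {} \<and> Z \<inter> (UNIV - L') \<noteq> {}}. opnorm (\<Psi> Z))
           \<le> F_norm \<Psi> d F * (\<Sum>x\<in>X. \<Sum>y\<in>UNIV - L'. F (d x y))"
proof -
  define S1 where "S1 = {Z. Z \<inter> X \<noteq> {} \<and> Z \<inter> (UNIV - L') \<noteq> {}}"
  define g where "g Z = opnorm (\<Psi> Z)" for Z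
  define Fn where "Fn = F_norm \<Psi> d F"
  have g0: "g Z \<ge> 0" for Z by (simp add: g_def opnorm_nonneg)
  have finS: "finite (S :: 'v set set)" for S by (rule finite_subset[OF subset_UNIV]) simp
  have finV: "finite (V :: 'v set)" for V by (rule finite_subset[OF subset_UNIV]) simp
  have Fpos: "F (d x y) > 0" for x y using F d unfolding decaying_def by blast
  have key: "(\<Sum>Z\<in>{Z. x \<in> Z \<and> y \<in> Z}. g Z) \<le> Fn * F (d x y)" for x y
  proof -
    let ?h = "\<lambda>p::'v \<times> 'v. (\<Sum>Z\<in>{Z. fst p \<in> Z \<and> snd p \<in> Z}. opnorm (\<Psi> Z)) / F (d (fst p) (snd p))"
    have "?h (x, y) \<le> Max (?h ` UNIV)"
      by (rule Max_ge) (simp, rule image_eqI[where x = "(x, y)"], simp_all)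
    hence "(\<Sum>Z\<in>{Z. x \<in> Z \<and> y \<in> Z}. g Z) / F (d x y) \<le> Fn"
      by (simp add: Fn_def F_norm_def g_def)
    thus ?thesis using Fpos[of x y] by (simp add: pos_divide_le_eq)
  qed
  define h where "h Z x y = (if x \<in> Z \<and> y \<in> Z then g Z else 0)" for Z x y
  have h0: "h Z x y \<ge> 0" for Z x y by (simp add: h_def g0)
  have step1: "g Z \<le> (\<Sum>x\<in>X. \<Sum>y\<in>UNIV - L'. h Z x y)" if Zs: "Z \<in> S1" for Z
  proof -
    obtain x where x: "x \<in> Z" "x \<in> X" using Zs unfolding S1_def by blast
    obtain y where y: "y \<in> Z" "y \<in> UNIV - L'" using Zs unfolding S1_def by blast
    have "g Z = h Z x y" using x y by (simp add: h_def)
    also have "\<dots> \<le> (\<Sum>y\<in>UNIV - L'. h Z x y)"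
      by (rule member_le_sum) (use y h0 finV in auto)
    also have "\<dots> \<le> (\<Sum>x\<in>X. \<Sum>y\<in>UNIV - L'. h Z x y)"
      by (rule member_le_sum[where f = "\<lambda>x. \<Sum>y\<in>UNIV - L'. h Z x y"]) (use x h0 finV in \<open>auto intro: sum_nonneg\<close>)
    finally show ?thesis .
  qed
  have step3: "(\<Sum>Z\<in>S1. h Z x y) = (\<Sum>Z\<in>{Z. x \<in> Z \<and> y \<in> Z}. g Z)" if "x \<in> X" "y \<in> UNIV - L'" for x y
  proof -
    have "(\<Sum>Z\<in>S1. h Z x y) = (\<Sum>Z\<in>{Z \<in> S1. x \<in> Z \<and> y \<in> Z}. g Z)"
      unfolding h_def by (rule sum.inter_filter[symmetric]) (rule finS)
    also have "{Z \<in> S1. x \<in> Z \<and> y \<in> Z} = {Z. x \<in> Z \<and> y \<in> Z}"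
      using that unfolding S1_def by blast
    finally show ?thesis .
  qed
  have "(\<Sum>Z\<in>S1. g Z) \<le> (\<Sum>Z\<in>S1. \<Sum>x\<in>X. \<Sum>y\<in>UNIV - L'. h Z x y)"
    by (rule sum_mono) (rule step1)
  also have "\<dots> = (\<Sum>x\<in>X. \<Sum>Z\<in>S1. \<Sum>y\<in>UNIV - L'. h Z x y)" by (rule sum.swap)
  also have "\<dots> = (\<Sum>x\<in>X. \<Sum>y\<in>UNIV - L'. \<Sum>Z\<in>S1. h Z x y)" by (simp only: sum.swap[of _ S1])
  also have "\<dots> = (\<Sum>x\<in>X. \<Sum>y\<in>UNIV - L'. \<Sum>Z\<in>{Z. x \<in> Z \<and> y \<in> Z}. g Z)"
    by (intro sum.cong refl step3) auto
  also have "\<dots> \<le> (\<Sum>x\<in>X. \<Sum>y\<in>UNIV - L'. Fn * F (d x y))"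
    by (intro sum_mono key)
  also have "\<dots> = Fn * (\<Sum>x\<in>X. \<Sum>y\<in>UNIV - L'. F (d x y))"
    by (simp add: sum_distrib_left)
  finally show ?thesis by (simp add: S1_def g_def Fn_def)
qed

theorem theorem3p7:
  fixes \<Psi> :: "'v::finite set \<Rightarrow> ('v, 'q::finite) op"
    and d :: "'v \<Rightarrow> 'v \<Rightarrow> real"
  assumes "interaction \<Psi>" and "commuting \<Psi>"
    and "\<forall>x y. d x y \<ge> 0"
  shows "(\<forall>X L' A t. X \<subseteq> L' \<longrightarrow> local_op X A \<longrightarrow>
            opnorm (dyn \<Psi> UNIV t A - dyn \<Psi> L' t A)
              \<le> 2 * opnorm A * \<bar>t\<bar> *
                 (\<Sum>Z\<in>{Z. Z \<inter> X \<noteq> {} \<and> Z \<inter> (UNIV - L') \<noteq> {}}. opnorm (\<Psi> Z)))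
       \<and> (\<forall>F. decaying F \<longrightarrow>
           (\<forall>X L' A t. X \<subseteq> L' \<longrightarrow> local_op X A \<longrightarrow>
            opnorm (dyn \<Psi> UNIV t A - dyn \<Psi> L' t A)
              \<le> 2 * opnorm A * F_norm \<Psi> d F * \<bar>t\<bar> *
                 (\<Sum>x\<in>X. \<Sum>y\<in>UNIV - L'. F (d x y))))"
proof (intro conjI allI impI)
  fix X L' and A :: "('v, 'q) op" and t
  assume "X \<subseteq> L'" "local_op X A"
  thus "opnorm (dyn \<Psi> UNIV t A - dyn \<Psi> L' t A)
              \<le> 2 * opnorm A * \<bar>t\<bar> *
                 (\<Sum>Z\<in>{Z. Z \<inter> X \<noteq> {} \<and> Z \<inter> (UNIV - L') \<noteq> {}}. opnorm (\<Psi> Z))"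
    by (rule main_part1[OF assms(1,2)])
next
  fix F X L' and A :: "('v, 'q) op" and t
  assume F: "decaying F" and XL: "X \<subseteq> L'" and A: "local_op X A"
  have "opnorm (dyn \<Psi> UNIV t A - dyn \<Psi> L' t A)
              \<le> 2 * opnorm A * \<bar>t\<bar> *
                 (\<Sum>Z\<in>{Z. Z \<inter> X \<noteq> {} \<and> Z \<inter> (UNIV - L') \<noteq> {}}. opnorm (\<Psi> Z))"
    by (rule main_part1[OF assms(1,2) XL A])
  also have "\<dots> \<le> 2 * opnorm A * \<bar>t\<bar> * (F_norm \<Psi> d F * (\<Sum>x\<in>X. \<Sum>y\<in>UNIV - L'. F (d x y)))"
    by (intro mult_left_mono part2_bound[OF assms(3) F XL]) (simp add: opnorm_nonneg)
  finally show "opnorm (dyn \<Psi> UNIV t A - dyn \<Psi> L' t A)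
              \<le> 2 * opnorm A * F_norm \<Psi> d F * \<bar>t\<bar> *
                 (\<Sum>x\<in>X. \<Sum>y\<in>UNIV - L'. F (d x y))"
    by (simp add: mult_ac)
qed

end
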